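(* A connected subcubic graph $G$ satisfies $2\alpha(G)=\mathrm{diss}(G)$ if and only if $G\in\mathcal{G}$.
   Context: All graphs are finite, simple and undirected; subcubic means maximum degree at most $3$. $\alpha(G)$ is the independence number. A set $D$ of vertices is a dissociation set if $G[D]$ has maximum degree at most $1$, and $\mathrm{diss}(G)$ is the maximum order of a dissociation set. Let $K_4^*$ be the graph obtained from $K_4$ with vertices $a,b,c,d$ by subdividing the edge $ab$ twice (i.e. replacing $ab$ by a path $a\,x\,y\,b$ with two new vertices $x,y$). The class $\mathcal{G}$ consists of $K_4$ together with all connected subcubic graphs obtained as follows: take the disjoint union of (at least one, finitely many) copies of the following three marked graphs: (1) $K_2$ with both vertices marked; (2) $K_3$ with exactly two of its three vertices marked; (3) $K_4^*$ with the two subdivision vertices $x,y$ and the vertices $c,d$ marked (so $a,b$ are unmarked); then add additional edges between vertices of the union, each added edge being incident with at most one marked vertex, such that the resulting graph is simple, connected and subcubic. *)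

theory Defs
  imports Main "HOL-Library.Disjoint_Sets"
begin

definition simple_graph :: "'a set \<Rightarrow> 'a set set \<Rightarrow> bool" where
  "simple_graph V E \<longleftrightarrow> finite V \<and>
     (\<forall>e\<in>E. \<exists>u v. e = {u, v} \<and> u \<noteq> v \<and> u \<in> V \<and> v \<in> V)"

definition degree :: "'a set set \<Rightarrow> 'a \<Rightarrow> nat" where
  "degree E v = card {e \<in> E. v \<in> e}"

definition subcubic :: "'a set \<Rightarrow> 'a set set \<Rightarrow> bool" where
  "subcubic V E \<longleftrightarrow> (\<forall>v\<in>V. degree E v \<le> 3)"

definition adj :: "'a set set \<Rightarrow> 'a \<Rightarrow> 'a \<Rightarrow> bool" where
  "adj E u v \<longleftrightarrow> {u, v} \<in> E"

definition connected_graph :: "'a set \<Rightarrow> 'a set set \<Rightarrow> bool" where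
  "connected_graph V E \<longleftrightarrow> V \<noteq> {} \<and> (\<forall>u\<in>V. \<forall>v\<in>V. (adj E)\<^sup>*\<^sup>* u v)"

definition independent_set :: "'a set \<Rightarrow> 'a set set \<Rightarrow> 'a set \<Rightarrow> bool" where
  "independent_set V E S \<longleftrightarrow> S \<subseteq> V \<and> (\<forall>u\<in>S. \<forall>v\<in>S. \<not> adj E u v)"

definition alpha :: "'a set \<Rightarrow> 'a set set \<Rightarrow> nat" where
  "alpha V E = Max (card ` {S. independent_set V E S})"

definition dissociation_set :: "'a set \<Rightarrow> 'a set set \<Rightarrow> 'a set \<Rightarrow> bool" where
  "dissociation_set V E S \<longleftrightarrow> S \<subseteq> V \<and> (\<forall>v\<in>S. card {u\<in>S. adj E u v} \<le> 1)"

definition diss :: "'a set \<Rightarrow> 'a set set \<Rightarrow> nat" where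
  "diss V E = Max (card ` {S. dissociation_set V E S})"

text \<open>The three marked template graphs, indexed 0 (K2), 1 (K3), 2 (K4*).
  For K4*: a = 0, b = 1, c = 2, d = 3, x = 4, y = 5.\<close>
definition templ_V :: "nat \<Rightarrow> nat set" where
  "templ_V t = (if t = 0 then {0, 1} else if t = 1 then {0, 1, 2} else {0, 1, 2, 3, 4, 5})"

definition templ_E :: "nat \<Rightarrow> nat set set" where
  "templ_E t = (if t = 0 then {{0, 1}}
     else if t = 1 then {{0, 1}, {0, 2}, {1, 2}}
     else {{0, 2}, {0, 3}, {1, 2}, {1, 3}, {2, 3}, {0, 4}, {4, 5}, {5, 1}})"

definition templ_M :: "nat \<Rightarrow> nat set" where
  "templ_M t = (if t = 0 then {0, 1} else if t = 1 then {0, 1} else {4, 5, 2, 3})"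

definition is_K4 :: "'a set \<Rightarrow> 'a set set \<Rightarrow> bool" where
  "is_K4 V E \<longleftrightarrow> card V = 4 \<and> E = {{u, v} | u v. u \<in> V \<and> v \<in> V \<and> u \<noteq> v}"

text \<open>Membership in the class \<G>: K4, or obtained from a disjoint union of copies of the
  marked templates (vertex partition P, copy X is the image of template ty X under the
  bijection emb X, M the set of marked vertices) by adding edges, each of which
  contains at most one marked vertex.\<close>
definition in_class_G :: "'a set \<Rightarrow> 'a set set \<Rightarrow> bool" where
  "in_class_G V E \<longleftrightarrow> is_K4 V E \<or>
    (\<exists>P M (ty :: 'a set \<Rightarrow> nat) (emb :: 'a set \<Rightarrow> nat \<Rightarrow> 'a).
       partition_on V P \<and>
       (\<forall>X\<in>P. ty X \<in> {0, 1, 2} \<and> bij_betw (emb X) (templ_V (ty X)) X \<and>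
              (\<forall>e\<in>templ_E (ty X). emb X ` e \<in> E) \<and>
              M \<inter> X = emb X ` templ_M (ty X)) \<and>
       (\<forall>e\<in>E. \<not> (\<exists>X\<in>P. \<exists>e'\<in>templ_E (ty X). e = emb X ` e') \<longrightarrow> card (e \<inter> M) \<le> 1))"

end

theory Submission
  imports Defs
begin


locale sgraph =
  fixes V :: "'a set" and E :: "'a set set"
  assumes sg: "simple_graph V E" and sc: "subcubic V E"
begin

lemma finV: "finite V" using sg by (simp add: simple_graph_def)

lemma adj_sym: "adj E u v = adj E v u"
  by (simp add: adj_def insert_commute)

lemma adjD: "adj E u v \<Longrightarrow> u \<in> V \<and> v \<in> V \<and> u \<noteq> v"
  using sg unfolding adj_def simple_graph_def
  by (smt (verit, ccfv_threshold) doubleton_eq_iff)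

lemma finE: "finite E"
proof -
  have "E \<subseteq> Pow V" using sg unfolding simple_graph_def by fastforce
  thus ?thesis by (metis finV finite_Pow_iff finite_subset)
qed

lemma nbr_le3: "card {u. adj E u v} \<le> 3"
proof (cases "v \<in> V")
  case False
  hence "{u. adj E u v} = {}" using adjD by blast
  thus ?thesis by simp
next
  case True
  have "inj_on (\<lambda>u. {u, v}) {u. adj E u v}"
    by (rule inj_onI) (auto simp: doubleton_eq_iff dest: adjD)
  moreover have "(\<lambda>u. {u, v}) ` {u. adj E u v} \<subseteq> {e\<in>E. v \<in> e}"
    by (auto simp: adj_def)
  moreover have "finite {e\<in>E. v \<in> e}" using finE by simp
  ultimately have "card {u. adj E u v} \<le> card {e\<in>E. v \<in> e}"
    by (rule card_inj_on_le)
  also have "\<dots> \<le> 3" using sc True unfolding subcubic_def degree_def by blast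
  finally show ?thesis .
qed

lemma four: "adj E a v \<Longrightarrow> adj E b v \<Longrightarrow> adj E c v \<Longrightarrow> adj E d v \<Longrightarrow> distinct [a,b,c,d] \<Longrightarrow> False"
proof -
  assume h: "adj E a v" "adj E b v" "adj E c v" "adj E d v" "distinct [a,b,c,d]"
  have "{a,b,c,d} \<subseteq> {u. adj E u v}" using h by auto
  moreover have "finite {u. adj E u v}" using finV adjD
    by (metis (no_types, lifting) finite_subset mem_Collect_eq subsetI)
  ultimately have "card {a,b,c,d} \<le> card {u. adj E u v}" by (metis card_mono)
  hence "card {a,b,c,d} \<le> 3" using nbr_le3[of v] by linarith
  thus False using h(5) by simp
qed

lemma indep_fin: "finite (card ` {S. independent_set V E S})"
proof -
  have "{S. independent_set V E S} \<subseteq> Pow V" by (auto simp: independent_set_def)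
  thus ?thesis using finV by (meson finite_Pow_iff finite_imageI finite_subset)
qed

lemma diss_fin: "finite (card ` {S. dissociation_set V E S})"
proof -
  have "{S. dissociation_set V E S} \<subseteq> Pow V" by (auto simp: dissociation_set_def)
  thus ?thesis using finV by (meson finite_Pow_iff finite_imageI finite_subset)
qed

lemma alpha_ge: "independent_set V E S \<Longrightarrow> card S \<le> alpha V E"
  unfolding alpha_def using indep_fin by simp

lemma diss_ge: "dissociation_set V E S \<Longrightarrow> card S \<le> diss V E"
  unfolding diss_def using diss_fin by simp

lemma alpha_ex: "\<exists>S. independent_set V E S \<and> card S = alpha V E"
proof -
  have "independent_set V E {}" by (simp add: independent_set_def)
  hence "alpha V E \<in> card ` {S. independent_set V E S}"
    unfolding alpha_def using indep_fin by (intro Max_in) auto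
  thus ?thesis by auto
qed

lemma diss_ex: "\<exists>S. dissociation_set V E S \<and> card S = diss V E"
proof -
  have "dissociation_set V E {}" by (simp add: dissociation_set_def)
  hence "diss V E \<in> card ` {S. dissociation_set V E S}"
    unfolding diss_def using diss_fin by (intro Max_in) auto
  thus ?thesis by auto
qed

lemma diss_sub: "dissociation_set V E D \<Longrightarrow> D' \<subseteq> D \<Longrightarrow> dissociation_set V E D'"
  unfolding dissociation_set_def
proof safe
  fix v assume h: "D \<subseteq> V" "\<forall>v\<in>D. card {u \<in> D. adj E u v} \<le> 1" "D' \<subseteq> D" "v \<in> D'"
  have "finite D" using h finV finite_subset by blast
  hence "card {u \<in> D'. adj E u v} \<le> card {u \<in> D. adj E u v}"
    using h by (intro card_mono) auto
  thus "card {u \<in> D'. adj E u v} \<le> 1" using h by force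
qed auto

lemma L0: "dissociation_set V E D \<Longrightarrow> \<exists>S\<subseteq>D. independent_set V E S \<and> card D \<le> 2 * card S"
proof (induct "card D" arbitrary: D rule: less_induct)
  case less
  have finD: "finite D" using less(2) finV finite_subset unfolding dissociation_set_def by blast
  show ?case
  proof (cases "D = {}")
    case True thus ?thesis by (auto simp: independent_set_def)
  next
    case False
    then obtain v where v: "v \<in> D" by blast
    show ?thesis
    proof (cases "\<exists>u\<in>D. adj E u v")
      case True
      then obtain u where u: "u \<in> D" "adj E u v" by blast
      have uv: "u \<noteq> v" using u adjD by blast
      let ?D = "D - {u, v}"
      have "card ?D < card D" using finD u v by (intro psubset_card_mono) auto
      moreover have "dissociation_set V E ?D" using less(2) diss_sub by blast
      ultimately obtain S where S: "S \<subseteq> ?D" "independent_set V E S" "card ?D \<le> 2 * card S"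
        using less(1) by blast
      have "card {u,v} \<le> card D" using finD u v by (intro card_mono) auto
      hence cD: "card ?D + 2 = card D" using finD u v uv
        by (simp add: card_Diff_subset)
      have onl: "\<And>w. w \<in> D \<Longrightarrow> adj E w v \<Longrightarrow> w = u"
      proof (rule ccontr)
        fix w assume w: "w \<in> D" "adj E w v" "w \<noteq> u"
        have "{u, w} \<subseteq> {x \<in> D. adj E x v}" using w u by auto
        hence "card {u, w} \<le> card {x \<in> D. adj E x v}" using finD by (intro card_mono) auto
        moreover have "card {x \<in> D. adj E x v} \<le> 1" using less(2) v unfolding dissociation_set_def by blast
        ultimately show False using w by simp
      qed
      have "independent_set V E (insert v S)"
        using S(1,2) v less(2) onl adj_sym unfolding independent_set_def dissociation_set_def
        by (smt (verit, ccfv_threshold) Diff_iff adjD insert_iff insert_subset subset_iff)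
      moreover have "card (insert v S) = card S + 1" using S(1) finD
        by (metis Diff_iff Suc_eq_plus1 card_insert_disjoint finite_subset insertCI subset_iff rev_finite_subset finite_Diff)
      ultimately show ?thesis using S cD v by (intro exI[of _ "insert v S"]) auto
    next
      case False
      let ?D = "D - {v}"
      have "card ?D < card D" using finD v by (intro psubset_card_mono) auto
      moreover have "dissociation_set V E ?D" using less(2) diss_sub by blast
      ultimately obtain S where S: "S \<subseteq> ?D" "independent_set V E S" "card ?D \<le> 2 * card S"
        using less(1) by blast
      have "independent_set V E (insert v S)"
        using S(1,2) v less(2) False adj_sym unfolding independent_set_def dissociation_set_def
        by (smt (verit, ccfv_threshold) Diff_iff adjD insert_iff insert_subset subset_iff)
      moreover have "card (insert v S) = card S + 1" using S(1) finD
        by (metis Diff_iff Suc_eq_plus1 card_insert_disjoint finite_subset insertCI subset_iff rev_finite_subset finite_Diff)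
      moreover have "card ?D + 1 = card D" using finD v card_Suc_Diff1 by fastforce
      ultimately show ?thesis using S v by (intro exI[of _ "insert v S"]) auto
    qed
  qed
qed

lemma diss_le: "diss V E \<le> 2 * alpha V E"
proof -
  obtain D where "dissociation_set V E D" "card D = diss V E" using diss_ex by blast
  then obtain S where "independent_set V E S" "card D \<le> 2 * card S" using L0 by blast
  thus ?thesis using alpha_ge \<open>card D = diss V E\<close> by force
qed

end


locale tight = sgraph +
  fixes D
  assumes Dd: "dissociation_set V E D" and Dc: "card D = diss V E"
    and eq: "2 * alpha V E = diss V E"
begin

lemma DV: "D \<subseteq> V" using Dd unfolding dissociation_set_def by blast
lemma finD: "finite D" using DV finV finite_subset by blast

lemma hasnb: "v \<in> D \<Longrightarrow> \<exists>u\<in>D. adj E u v"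
proof (rule ccontr)
  assume v: "v \<in> D" and n: "\<not> (\<exists>u\<in>D. adj E u v)"
  have "dissociation_set V E (D - {v})" using Dd diss_sub by blast
  then obtain S where S: "S \<subseteq> D - {v}" "independent_set V E S" "card (D - {v}) \<le> 2 * card S"
    using L0 by blast
  have "independent_set V E (insert v S)"
    using S(1,2) v n adj_sym DV unfolding independent_set_def
    by (smt (verit, ccfv_threshold) Diff_iff insert_iff insert_subset subset_iff)
  hence "card (insert v S) \<le> alpha V E" by (rule alpha_ge)
  moreover have "card (insert v S) = card S + 1" using S(1) finD
    by (metis Diff_iff Suc_eq_plus1 card_insert_disjoint finite_subset insertCI subset_iff rev_finite_subset finite_Diff)
  moreover have "card (D - {v}) + 1 = card D" using finD v card_Suc_Diff1 by fastforce
  ultimately show False using S(3) Dc eq by linarith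
qed

lemma onenb: "v \<in> D \<Longrightarrow> u \<in> D \<Longrightarrow> w \<in> D \<Longrightarrow> adj E u v \<Longrightarrow> adj E w v \<Longrightarrow> u = w"
proof (rule ccontr)
  assume h: "v \<in> D" "u \<in> D" "w \<in> D" "adj E u v" "adj E w v" "u \<noteq> w"
  have "{u, w} \<subseteq> {x \<in> D. adj E x v}" using h by auto
  hence "card {u, w} \<le> card {x \<in> D. adj E x v}" using finD by (intro card_mono) auto
  moreover have "card {x \<in> D. adj E x v} \<le> 1" using Dd h unfolding dissociation_set_def by blast
  ultimately show False using h by simp
qed

definition p where "p v = (THE u. u \<in> D \<and> adj E u v)"

lemma p_in: "v \<in> D \<Longrightarrow> p v \<in> D \<and> adj E (p v) v"
proof -
  assume v: "v \<in> D"
  then obtain u where "u \<in> D" "adj E u v" using hasnb by blast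
  hence "\<exists>!u. u \<in> D \<and> adj E u v" using onenb v by blast
  thus ?thesis unfolding p_def by (rule theI')
qed

lemma pD: "v \<in> D \<Longrightarrow> p v \<in> D" using p_in by blast
lemma padj: "v \<in> D \<Longrightarrow> adj E (p v) v" using p_in by blast
lemma padj2: "v \<in> D \<Longrightarrow> adj E v (p v)" using p_in adj_sym by blast

lemma p_uniq: "v \<in> D \<Longrightarrow> u \<in> D \<Longrightarrow> adj E u v \<Longrightarrow> u = p v"
  using p_in onenb by blast

lemma pp: "v \<in> D \<Longrightarrow> p (p v) = v"
  using p_uniq[of "p v" v] p_in adj_sym by metis

lemma p_ne: "v \<in> D \<Longrightarrow> p v \<noteq> v"
  using padj adjD by blast

lemma p_inj: "v \<in> D \<Longrightarrow> w \<in> D \<Longrightarrow> p v = p w \<Longrightarrow> v = w"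
  using pp by metis

lemma L1: "D0 \<subseteq> D \<Longrightarrow> (\<forall>a\<in>D0. p a \<in> D0) \<Longrightarrow> (\<forall>a\<in>D0. a \<in> F \<longrightarrow> p a \<notin> F) \<Longrightarrow>
   \<exists>S \<subseteq> D0 - F. (\<forall>a\<in>S. \<forall>b\<in>S. \<not> adj E a b) \<and> card D0 = 2 * card S"
proof (induct "card D0" arbitrary: D0 rule: less_induct)
  case less
  have fin: "finite D0" using less(2) finD finite_subset by blast
  show ?case
  proof (cases "D0 = {}")
    case True thus ?thesis by auto
  next
    case False
    then obtain v where v: "v \<in> D0" by blast
    have vD: "v \<in> D" using v less(2) by blast
    have pv: "p v \<in> D0" using less(3) v by blast
    have ne: "p v \<noteq> v" using p_ne vD by blast
    let ?D = "D0 - {v, p v}"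
    have "card ?D < card D0" using fin v by (intro psubset_card_mono) auto
    moreover have "?D \<subseteq> D" using less(2) by blast
    moreover have cl: "\<forall>a\<in>?D. p a \<in> ?D"
    proof
      fix a assume a: "a \<in> ?D"
      have aD: "a \<in> D" using a less(2) by blast
      have "p a \<in> D0" using less(3) a by blast
      moreover have "p a \<noteq> v" using a aD pp by (metis DiffE insertCI)
      moreover have "p a \<noteq> p v" using a aD vD p_inj by blast
      ultimately show "p a \<in> ?D" by blast
    qed
    moreover have "\<forall>a\<in>?D. a \<in> F \<longrightarrow> p a \<notin> F" using less(4) by blast
    ultimately have "\<exists>S \<subseteq> ?D - F. (\<forall>a\<in>S. \<forall>b\<in>S. \<not> adj E a b) \<and> card ?D = 2 * card S"
      by (rule less(1))
    then obtain S where S: "S \<subseteq> ?D - F" "\<forall>a\<in>S. \<forall>b\<in>S. \<not> adj E a b" "card ?D = 2 * card S"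
      by blast
    define z where "z = (if v \<in> F then p v else v)"
    have zF: "z \<notin> F" using less(4) v z_def by auto
    have z: "z = v \<or> z = p v" using z_def by auto
    have zD0: "z \<in> D0" using z v pv by blast
    have zS: "z \<notin> S" using S(1) z by blast
    have nadj: "\<forall>s\<in>S. \<not> adj E z s"
    proof
      fix s assume s: "s \<in> S"
      have sD: "s \<in> D" using s S(1) less(2) by blast
      show "\<not> adj E z s"
      proof
        assume "adj E z s"
        hence "z = p s" using p_uniq sD zD0 less(2) by blast
        hence "s = p z" using pp sD by metis
        thus False using z s S(1) pp vD by auto
      qed
    qed
    have "card {v, p v} \<le> card D0" using fin v pv by (intro card_mono) auto
    hence cD: "card ?D + 2 = card D0" using fin v pv ne by (simp add: card_Diff_subset)
    have cS: "card (insert z S) = card S + 1" using zS fin S(1)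
      by (metis Suc_eq_plus1 card_insert_disjoint finite_Diff finite_subset)
    show ?thesis
      apply (rule exI[of _ "insert z S"])
      using S zF zD0 nadj cS cD adj_sym by (auto dest: adjD)
  qed
qed

lemma IC:
  assumes "D0 \<subseteq> D" "\<forall>a\<in>D0. p a \<in> D0" "W \<subseteq> V - D"
    "\<forall>a\<in>W. \<forall>b\<in>W. \<not> adj E a b"
    "\<forall>a\<in>D0. \<not> ((\<exists>w\<in>W. adj E w a) \<and> (\<exists>w\<in>W. adj E w (p a)))"
    "card D < card D0 + 2 * card W"
  shows False
proof -
  let ?F = "{a. \<exists>w\<in>W. adj E w a}"
  have "\<forall>a\<in>D0. a \<in> ?F \<longrightarrow> p a \<notin> ?F" using assms(5) by auto
  from L1[OF assms(1,2) this] obtain S where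
    S: "S \<subseteq> D0 - ?F" "\<forall>a\<in>S. \<forall>b\<in>S. \<not> adj E a b" "card D0 = 2 * card S"
    by blast
  have WV: "W \<subseteq> V" using assms(3) by blast
  have SD: "S \<subseteq> D" using S(1) assms(1) by blast
  have finW: "finite W" using finite_subset[OF WV finV] .
  have finS: "finite S" using finite_subset[OF SD finD] .
  have "independent_set V E (S \<union> W)"
    unfolding independent_set_def
  proof (intro conjI ballI)
    show "S \<union> W \<subseteq> V" using SD WV DV by blast
  next
    fix a b assume ab: "a \<in> S \<union> W" "b \<in> S \<union> W"
    show "\<not> adj E a b"
    proof (cases "a \<in> S")
      case True
      show ?thesis
      proof (cases "b \<in> S")
        case True thus ?thesis using S(2) \<open>a \<in> S\<close> by blast
      next
        case False hence "b \<in> W" using ab by blast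
        thus ?thesis using S(1) True adj_sym by blast
      qed
    next
      case False hence aW: "a \<in> W" using ab by blast
      show ?thesis
      proof (cases "b \<in> S")
        case True thus ?thesis using S(1) aW by blast
      next
        case False hence "b \<in> W" using ab by blast
        thus ?thesis using assms(4) aW by blast
      qed
    qed
  qed
  hence "card (S \<union> W) \<le> alpha V E" by (rule alpha_ge)
  moreover have "card (S \<union> W) = card S + card W"
    using S(1) assms(1,3) finW finS by (intro card_Un_disjoint) auto
  ultimately show False using S(3) assms(6) Dc eq by linarith
qed

end


context tight begin

definition edge where "edge u = {u, p u}"
definition hosts where "hosts u = {r \<in> V - D. adj E r u \<and> adj E r (p u)}"

lemma nbr3: "adj E a v \<Longrightarrow> adj E b v \<Longrightarrow> adj E c v \<Longrightarrow> distinct [a,b,c] \<Longrightarrow> adj E x v \<Longrightarrow> x = a \<or> x = b \<or> x = c"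
  using four[of a v b c x] by auto

lemma nbr3': "adj E v a \<Longrightarrow> adj E v b \<Longrightarrow> adj E v c \<Longrightarrow> distinct [a,b,c] \<Longrightarrow> adj E v x \<Longrightarrow> x = a \<or> x = b \<or> x = c"
  using nbr3 adj_sym by metis

lemma four': "adj E v a \<Longrightarrow> adj E v b \<Longrightarrow> adj E v c \<Longrightarrow> adj E v d \<Longrightarrow> distinct [a,b,c,d] \<Longrightarrow> False"
  using four adj_sym by metis

lemma hosts_p: "u \<in> D \<Longrightarrow> hosts (p u) = hosts u"
  unfolding hosts_def using pp by auto

lemma edge_p: "u \<in> D \<Longrightarrow> edge (p u) = edge u"
  unfolding edge_def using pp by auto

lemma hostsD: "r \<in> hosts u \<Longrightarrow> r \<in> V \<and> r \<notin> D \<and> adj E r u \<and> adj E r (p u)"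
  unfolding hosts_def by auto

lemma closedD: "X \<subseteq> D \<Longrightarrow> (\<forall>a\<in>X. p a \<in> X) \<Longrightarrow> \<forall>a\<in>D - X. p a \<in> D - X"
  using pp pD by (metis DiffD1 DiffD2 DiffI)

lemma F1: "r \<in> V - D \<Longrightarrow> \<exists>u\<in>D. r \<in> hosts u"
proof (rule ccontr)
  assume r: "r \<in> V - D" and n: "\<not> (\<exists>u\<in>D. r \<in> hosts u)"
  show False
  proof (rule IC[of D "{r}"])
    show "D \<subseteq> D" by simp
    show "\<forall>a\<in>D. p a \<in> D" using pD by blast
    show "{r} \<subseteq> V - D" using r by blast
    show "\<forall>a\<in>{r}. \<forall>b\<in>{r}. \<not> adj E a b" using adjD by blast
    show "\<forall>a\<in>D. \<not> ((\<exists>w\<in>{r}. adj E w a) \<and> (\<exists>w\<in>{r}. adj E w (p a)))"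
      using n r unfolding hosts_def by blast
    show "card D < card D + 2 * card {r}" by simp
  qed
qed

lemma F2: "u \<in> D \<Longrightarrow> w \<in> D \<Longrightarrow> r \<in> hosts u \<Longrightarrow> r \<in> hosts w \<Longrightarrow> w = u \<or> w = p u"
proof (rule ccontr)
  assume h: "u \<in> D" "w \<in> D" "r \<in> hosts u" "r \<in> hosts w" "\<not> (w = u \<or> w = p u)"
  have "p w \<noteq> u" using h pp by metis
  moreover have "p w \<noteq> p u" using h p_inj by metis
  moreover have "u \<noteq> p u" "w \<noteq> p w" using p_ne h(1,2) by metis+
  ultimately have "distinct [u, p u, w, p w]" using h by auto
  thus False using four'[of r u "p u" w "p w"] h hostsD by blast
qed

lemma hosts_sub: "u \<in> D \<Longrightarrow> hosts u \<subseteq> {x. adj E x u} - {p u}"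
  unfolding hosts_def using pD by auto

lemma finN: "finite {x. adj E x u}"
  using finV adjD by (metis (no_types, lifting) finite_subset mem_Collect_eq subsetI)

lemma F3: "u \<in> D \<Longrightarrow> card (hosts u) \<le> 2 \<and> finite (hosts u)"
proof -
  assume u: "u \<in> D"
  have f: "finite (hosts u)" using hosts_sub[OF u] finN finite_subset
    by (metis finite_Diff)
  have "card (hosts u) \<le> card ({x. adj E x u} - {p u})"
    using hosts_sub[OF u] finN by (intro card_mono) auto
  also have "\<dots> = card {x. adj E x u} - 1" using padj u finN by simp
  also have "\<dots> \<le> 2" using nbr_le3[of u] by linarith
  finally show ?thesis using f by blast
qed

lemma F4:
  assumes conn: "connected_graph V E" and u: "u \<in> D" and r: "r1 \<in> hosts u" "r2 \<in> hosts u" "r1 \<noteq> r2"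
    and a: "adj E r1 r2"
  shows "is_K4 V E"
proof -
  let ?C = "{u, p u, r1, r2}"
  have h1: "adj E r1 u" "adj E r1 (p u)" "adj E r2 u" "adj E r2 (p u)" "r1 \<notin> D" "r2 \<notin> D"
    "r1 \<in> V" "r2 \<in> V" using r hostsD by auto
  have pu: "p u \<in> D" "adj E (p u) u" "p u \<noteq> u" using pD padj p_ne u by auto
  have ds: "distinct [u, p u, r1, r2]" using h1 pu u r(3) by auto
  have CV: "?C \<subseteq> V" using h1 u pu DV by auto
  have cl: "\<And>y z. y \<in> ?C \<Longrightarrow> adj E y z \<Longrightarrow> z \<in> ?C"
  proof -
    fix y z assume y: "y \<in> ?C" and yz: "adj E y z"
    have "y = u \<or> y = p u \<or> y = r1 \<or> y = r2" using y by blast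
    thus "z \<in> ?C"
    proof (elim disjE)
      assume "y = u"
      thus ?thesis using nbr3'[of u "p u" r1 r2 z] yz ds h1 pu adj_sym by auto
    next
      assume "y = p u"
      thus ?thesis using nbr3'[of "p u" u r1 r2 z] yz ds h1 pu adj_sym by auto
    next
      assume "y = r1"
      thus ?thesis using nbr3'[of r1 u "p u" r2 z] yz ds h1 a by auto
    next
      assume "y = r2"
      thus ?thesis using nbr3'[of r2 u "p u" r1 z] yz ds h1 a adj_sym by auto
    qed
  qed
  have "V \<subseteq> ?C"
  proof
    fix v assume v: "v \<in> V"
    have "(adj E)\<^sup>*\<^sup>* u v" using conn u v DV unfolding connected_graph_def by blast
    thus "v \<in> ?C"
    proof (induct rule: rtranclp_induct)
      case base thus ?case by simp
    next
      case (step y z) thus ?case using cl by blast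
    qed
  qed
  hence VC: "V = ?C" using CV by blast
  have c4: "card V = 4" using VC ds by simp
  have allE: "\<And>x y. x \<in> ?C \<Longrightarrow> y \<in> ?C \<Longrightarrow> x \<noteq> y \<Longrightarrow> {x, y} \<in> E"
  proof -
    fix x y assume "x \<in> ?C" "y \<in> ?C" "x \<noteq> y"
    hence "adj E x y" using h1 pu a adj_sym by auto
    thus "{x, y} \<in> E" by (simp add: adj_def)
  qed
  have "E = {{x, y} | x y. x \<in> V \<and> y \<in> V \<and> x \<noteq> y}"
  proof
    show "E \<subseteq> {{x, y} | x y. x \<in> V \<and> y \<in> V \<and> x \<noteq> y}"
      using sg unfolding simple_graph_def by blast
    show "{{x, y} | x y. x \<in> V \<and> y \<in> V \<and> x \<noteq> y} \<subseteq> E"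
      using allE VC by blast
  qed
  thus ?thesis using c4 unfolding is_K4_def by blast
qed

end

locale tight2 = tight +
  assumes nk: "\<And>u r1 r2. u \<in> D \<Longrightarrow> r1 \<in> hosts u \<Longrightarrow> r2 \<in> hosts u \<Longrightarrow> \<not> adj E r1 r2"
begin

lemma F5:
  assumes u: "u \<in> D" and r: "r1 \<in> hosts u" "r2 \<in> hosts u" "r1 \<noteq> r2"
  shows "\<exists>x\<in>D. x \<notin> edge u \<and> adj E r1 x \<and> adj E r2 (p x)"
proof (rule ccontr)
  assume n: "\<not> ?thesis"
  have h1: "adj E r1 u" "adj E r1 (p u)" "adj E r2 u" "adj E r2 (p u)" "r1 \<notin> D" "r2 \<notin> D"
    "r1 \<in> V" "r2 \<in> V" using r hostsD by auto
  have pu: "p u \<in> D" "p u \<noteq> u" using pD p_ne u by auto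
  let ?D0 = "D - edge u"
  show False
  proof (rule IC[of ?D0 "{r1, r2}"])
    show "?D0 \<subseteq> D" by blast
    show "\<forall>a\<in>?D0. p a \<in> ?D0" by (rule closedD) (use u pu pp in \<open>auto simp: edge_def\<close>)
    show "{r1, r2} \<subseteq> V - D" using h1 by blast
    show "\<forall>a\<in>{r1, r2}. \<forall>b\<in>{r1, r2}. \<not> adj E a b" using nk u r adjD by blast
    show "\<forall>a\<in>?D0. \<not> ((\<exists>w\<in>{r1, r2}. adj E w a) \<and> (\<exists>w\<in>{r1, r2}. adj E w (p a)))"
    proof (intro ballI notI)
      fix a assume a: "a \<in> ?D0" and "(\<exists>w\<in>{r1, r2}. adj E w a) \<and> (\<exists>w\<in>{r1, r2}. adj E w (p a))"
      then obtain w w' where w: "w \<in> {r1, r2}" "w' \<in> {r1, r2}" "adj E w a" "adj E w' (p a)" by blast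
      have aD: "a \<in> D" "a \<notin> edge u" using a by auto
      have pa1: "p a \<in> D" "p a \<noteq> a" using aD pD p_ne by auto
      have "p a \<noteq> u"
      proof
        assume "p a = u" hence "a = p u" using pp aD by metis
        thus False using aD unfolding edge_def by blast
      qed
      moreover have "p a \<noteq> p u" using p_inj aD u unfolding edge_def by blast
      ultimately have pa: "p a \<in> D" "p a \<notin> edge u" "p a \<noteq> a" using pa1 unfolding edge_def by auto
      have ds: "distinct [u, p u, a, p a]" using aD pa pu unfolding edge_def by auto
      show False
      proof (cases "w = w'")
        case True
        thus ?thesis using four'[of w u "p u" a "p a"] ds w h1 by auto
      next
        case False
        show ?thesis
        proof (cases "w = r1")
          case True
          hence "w' = r2" using w False by blast
          thus ?thesis using n aD w True by blast
        next
          case f2: False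
          hence "w = r2" "w' = r1" using w False by auto
          thus ?thesis using n pa w pp aD by metis
        qed
      qed
    qed
    have "edge u \<subseteq> D" using u pu unfolding edge_def by blast
    moreover have "card (edge u) = 2" using pu unfolding edge_def by simp
    ultimately have "card ?D0 + 2 = card D" using finD
      by (metis card_Diff_subset card_mono diff_add_inverse2 add.commute le_add_diff_inverse finite_subset)
    moreover have "card {r1, r2} = 2" using r(3) by simp
    ultimately show "card D < card ?D0 + 2 * card {r1, r2}" by linarith
  qed
qed

end


context tight begin

lemma cardX: "X \<subseteq> D \<Longrightarrow> card (D - X) + card X = card D"
  using finD by (metis card_Diff_subset card_mono finite_subset le_add_diff_inverse2)

lemma p_notin_edge: "a \<in> D \<Longrightarrow> u \<in> D \<Longrightarrow> a \<notin> edge u \<Longrightarrow> p a \<notin> edge u"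
proof
  assume h: "a \<in> D" "u \<in> D" "a \<notin> edge u" "p a \<in> edge u"
  hence "p a = u \<or> p a = p u" unfolding edge_def by blast
  thus False
  proof
    assume "p a = u" hence "a = p u" using pp h by metis
    thus False using h unfolding edge_def by blast
  next
    assume "p a = p u" hence "a = u" using p_inj h by blast
    thus False using h unfolding edge_def by blast
  qed
qed

lemma edge_closed: "u \<in> D \<Longrightarrow> \<forall>a\<in>edge u. p a \<in> edge u"
  unfolding edge_def using pp by auto

lemma edge_sub: "u \<in> D \<Longrightarrow> edge u \<subseteq> D"
  unfolding edge_def using pD by auto

end

context tight2 begin

definition sats where
  "sats u = {v \<in> D. v \<notin> edge u \<and> card (hosts u) = 2 \<and> (\<exists>r\<in>hosts u. adj E r v \<or> adj E r (p v))}"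

lemma cfg:
  assumes u: "u \<in> D" and c: "card (hosts u) = 2"
  obtains r1 r2 x where "hosts u = {r1, r2}" "r1 \<noteq> r2" "x \<in> D" "x \<notin> edge u" "p x \<in> D" "p x \<notin> edge u"
    "adj E r1 u" "adj E r1 (p u)" "adj E r2 u" "adj E r2 (p u)" "adj E r1 x" "adj E r2 (p x)"
    "r1 \<in> V" "r2 \<in> V" "r1 \<notin> D" "r2 \<notin> D" "\<not> adj E r1 r2"
    "\<And>z. adj E r1 z \<Longrightarrow> z = u \<or> z = p u \<or> z = x"
    "\<And>z. adj E r2 z \<Longrightarrow> z = u \<or> z = p u \<or> z = p x"
    "sats u = {x, p x}" "p u \<in> D" "p u \<noteq> u" "p x \<noteq> x"
proof -
  obtain r1 r2 where r: "hosts u = {r1, r2}" "r1 \<noteq> r2" using c by (metis card_2_iff)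
  have r12: "r1 \<in> hosts u" "r2 \<in> hosts u" using r by auto
  obtain x where x: "x \<in> D" "x \<notin> edge u" "adj E r1 x" "adj E r2 (p x)"
    using F5[OF u r12 r(2)] by blast
  have h1: "adj E r1 u" "adj E r1 (p u)" "adj E r2 u" "adj E r2 (p u)" "r1 \<notin> D" "r2 \<notin> D"
    "r1 \<in> V" "r2 \<in> V" using r12 hostsD by auto
  have pu: "p u \<in> D" "p u \<noteq> u" using pD p_ne u by auto
  have px: "p x \<in> D" "p x \<notin> edge u" "p x \<noteq> x" using pD p_ne x p_notin_edge u by auto
  have na: "\<not> adj E r1 r2" using nk u r12 by blast
  have xe: "x \<noteq> u" "x \<noteq> p u" "p x \<noteq> u" "p x \<noteq> p u" using x px unfolding edge_def by auto
  have n1: "\<And>z. adj E r1 z \<Longrightarrow> z = u \<or> z = p u \<or> z = x"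
    using nbr3'[of r1 u "p u" x] h1 x pu xe by auto
  have n2: "\<And>z. adj E r2 z \<Longrightarrow> z = u \<or> z = p u \<or> z = p x"
    using nbr3'[of r2 u "p u" "p x"] h1 x pu xe by auto
  have "sats u = {x, p x}"
  proof
    show "{x, p x} \<subseteq> sats u"
    proof -
      have "x \<in> sats u" unfolding sats_def using x c r12 by blast
      moreover have "p x \<in> sats u" unfolding sats_def using px c r12 x by blast
      ultimately show ?thesis by blast
    qed
  next
    show "sats u \<subseteq> {x, p x}"
    proof
      fix v assume v: "v \<in> sats u"
      hence vD: "v \<in> D" "v \<notin> edge u" unfolding sats_def by auto
      have pv: "p v \<notin> edge u" using p_notin_edge vD u by blast
      obtain r where rr: "r \<in> hosts u" "adj E r v \<or> adj E r (p v)" using v unfolding sats_def by blast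
      have "r = r1 \<or> r = r2" using rr r by blast
      thus "v \<in> {x, p x}"
      proof
        assume "r = r1"
        thus ?thesis using rr n1 vD pv pp x unfolding edge_def by (metis insertCI)
      next
        assume "r = r2"
        thus ?thesis using rr n2 vD pv pp x unfolding edge_def by (metis insertCI)
      qed
    qed
  qed
  thus ?thesis using that r x h1 px na n1 n2 pu by blast
qed

lemma sats_sub: "sats u \<subseteq> D" unfolding sats_def by blast

lemma sats_card: "v \<in> sats u \<Longrightarrow> card (hosts u) = 2" unfolding sats_def by blast

lemma F6:
  assumes u: "u \<in> D" and v: "v \<in> sats u"
  shows "hosts v = {}"
proof (rule ccontr)
  assume "hosts v \<noteq> {}"
  then obtain r' where r'v: "r' \<in> hosts v" by blast
  obtain r1 r2 x where c: "hosts u = {r1, r2}" "r1 \<noteq> r2" "x \<in> D" "x \<notin> edge u" "p x \<in> D" "p x \<notin> edge u"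
    "adj E r1 u" "adj E r1 (p u)" "adj E r2 u" "adj E r2 (p u)" "adj E r1 x" "adj E r2 (p x)"
    "r1 \<in> V" "r2 \<in> V" "r1 \<notin> D" "r2 \<notin> D" "\<not> adj E r1 r2"
    "\<And>z. adj E r1 z \<Longrightarrow> z = u \<or> z = p u \<or> z = x"
    "\<And>z. adj E r2 z \<Longrightarrow> z = u \<or> z = p u \<or> z = p x"
    "sats u = {x, p x}" "p u \<in> D" "p u \<noteq> u" "p x \<noteq> x"
    using cfg[OF u sats_card[OF v]] by blast
  have "v = x \<or> v = p x" using v c(20) by blast
  hence "hosts v = hosts x" using hosts_p c(3) by blast
  hence r': "r' \<in> hosts x" using r'v by blast
  have h': "r' \<in> V" "r' \<notin> D" "adj E r' x" "adj E r' (p x)" using hostsD[OF r'] by auto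
  have xe: "x \<noteq> u" "x \<noteq> p u" "p x \<noteq> u" "p x \<noteq> p u" using c(4,6) unfolding edge_def by auto
  have r'ne: "r' \<noteq> r1" "r' \<noteq> r2"
    using F2[OF c(3) u, of r'] r' c(1) xe pp[OF c(3)] by auto
  let ?X = "edge u \<union> edge x"
  let ?D0 = "D - ?X"
  let ?W = "{r1, r2, r'}"
  show False
  proof (rule IC[of ?D0 ?W])
    show "?D0 \<subseteq> D" by blast
    show "\<forall>a\<in>?D0. p a \<in> ?D0" using closedD[of ?X] edge_sub edge_closed u c(3) by blast
    show "?W \<subseteq> V - D" using c h' by blast
    show "\<forall>a\<in>?W. \<forall>b\<in>?W. \<not> adj E a b"
    proof (intro ballI)
      fix a b assume a: "a \<in> ?W" and b: "b \<in> ?W"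
      have n1: "\<not> adj E r1 r'" using c(18) h' u c(21) c(3) by metis
      have n2: "\<not> adj E r2 r'" using c(19) h' u c(21) c(5) by metis
      show "\<not> adj E a b" using a b n1 n2 c(17) adj_sym adjD by blast
    qed
    show "\<forall>a\<in>?D0. \<not> ((\<exists>w\<in>?W. adj E w a) \<and> (\<exists>w\<in>?W. adj E w (p a)))"
    proof (intro ballI notI)
      fix a assume a: "a \<in> ?D0" and "(\<exists>w\<in>?W. adj E w a) \<and> (\<exists>w\<in>?W. adj E w (p a))"
      then obtain w w' where w: "w \<in> ?W" "w' \<in> ?W" "adj E w a" "adj E w' (p a)" by blast
      have aD: "a \<in> D" "a \<notin> edge u" "a \<notin> edge x" using a by auto
      have pa: "p a \<in> D" "p a \<notin> edge u" "p a \<notin> edge x" "p a \<noteq> a"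
        using aD pD p_ne p_notin_edge u c(3) by auto
      have an: "a \<noteq> u" "a \<noteq> p u" "a \<noteq> x" "a \<noteq> p x" "p a \<noteq> u" "p a \<noteq> p u" "p a \<noteq> x" "p a \<noteq> p x"
        using aD pa unfolding edge_def by auto
      have "w = r'" using w(1,3) c(18,19) an by blast
      moreover have "w' = r'" using w(2,4) c(18,19) an by blast
      ultimately show False using four'[of r' x "p x" a "p a"] w h' an c(23) pa by auto
    qed
    have Xs: "?X \<subseteq> D" using edge_sub u c(3) by blast
    have "card ?X = 4" using c xe unfolding edge_def by auto
    hence "card ?D0 + 4 = card D" using cardX[OF Xs] by simp
    moreover have "card ?W = 3" using c(2) r'ne by auto
    ultimately show "card D < card ?D0 + 2 * card ?W" by linarith
  qed
qed

lemma F7: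
  assumes u1: "u1 \<in> D" and u2: "u2 \<in> D" and v: "v \<in> sats u1" "v \<in> sats u2"
  shows "u2 \<in> edge u1"
proof (rule ccontr)
  assume ne: "u2 \<notin> edge u1"
  obtain r1 r2 x where c: "hosts u1 = {r1, r2}" "r1 \<noteq> r2" "x \<in> D" "x \<notin> edge u1" "p x \<in> D" "p x \<notin> edge u1"
    "adj E r1 u1" "adj E r1 (p u1)" "adj E r2 u1" "adj E r2 (p u1)" "adj E r1 x" "adj E r2 (p x)"
    "r1 \<in> V" "r2 \<in> V" "r1 \<notin> D" "r2 \<notin> D" "\<not> adj E r1 r2"
    "\<And>z. adj E r1 z \<Longrightarrow> z = u1 \<or> z = p u1 \<or> z = x"
    "\<And>z. adj E r2 z \<Longrightarrow> z = u1 \<or> z = p u1 \<or> z = p x"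
    "sats u1 = {x, p x}" "p u1 \<in> D" "p u1 \<noteq> u1" "p x \<noteq> x"
    using cfg[OF u1 sats_card[OF v(1)]] by blast
  obtain s1 s2 y where d: "hosts u2 = {s1, s2}" "s1 \<noteq> s2" "y \<in> D" "y \<notin> edge u2" "p y \<in> D" "p y \<notin> edge u2"
    "adj E s1 u2" "adj E s1 (p u2)" "adj E s2 u2" "adj E s2 (p u2)" "adj E s1 y" "adj E s2 (p y)"
    "s1 \<in> V" "s2 \<in> V" "s1 \<notin> D" "s2 \<notin> D" "\<not> adj E s1 s2"
    "\<And>z. adj E s1 z \<Longrightarrow> z = u2 \<or> z = p u2 \<or> z = y"
    "\<And>z. adj E s2 z \<Longrightarrow> z = u2 \<or> z = p u2 \<or> z = p y"
    "sats u2 = {y, p y}" "p u2 \<in> D" "p u2 \<noteq> u2" "p y \<noteq> y"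
    using cfg[OF u2 sats_card[OF v(2)]] by blast
  have vx: "v = x \<or> v = p x" "v = y \<or> v = p y" using v c(20) d(20) by auto
  have ey: "edge y = edge x" using vx edge_p c(3) d(3) by metis
  have pu2: "p u2 \<notin> edge u1" using p_notin_edge u1 u2 ne by blast
  have e12: "edge u1 \<inter> edge u2 = {}" using ne pu2 unfolding edge_def by auto
  have "x \<in> edge y" "p x \<in> edge y" using ey unfolding edge_def by auto
  hence "x = y \<or> x = p y" "p x = y \<or> p x = p y" unfolding edge_def by auto
  hence x2: "x \<notin> edge u2" "p x \<notin> edge u2" using d(4,6) by auto
  have sn: "s1 \<notin> hosts u1" "s2 \<notin> hosts u1"
    using F2[OF u1 u2] d(1) ne pu2 unfolding edge_def by auto
  let ?X = "edge u1 \<union> edge u2 \<union> edge x"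
  let ?D0 = "D - ?X"
  let ?W = "{r1, r2, s1, s2}"
  have nbW: "\<And>w a. w \<in> ?W \<Longrightarrow> adj E w a \<Longrightarrow> a \<in> ?X"
  proof -
    fix w a assume w: "w \<in> ?W" "adj E w a"
    have "w = r1 \<or> w = r2 \<or> w = s1 \<or> w = s2" using w by blast
    thus "a \<in> ?X"
    proof (elim disjE)
      assume "w = r1" thus ?thesis using c(18) w unfolding edge_def by blast
    next
      assume "w = r2" thus ?thesis using c(19) w unfolding edge_def by blast
    next
      assume "w = s1" thus ?thesis using d(18) w ey unfolding edge_def by blast
    next
      assume "w = s2" thus ?thesis using d(19) w ey unfolding edge_def by blast
    qed
  qed
  show False
  proof (rule IC[of ?D0 ?W])
    show "?D0 \<subseteq> D" by blast
    show "\<forall>a\<in>?D0. p a \<in> ?D0" using closedD[of ?X] edge_sub edge_closed u1 u2 c(3) by blast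
    show "?W \<subseteq> V - D" using c d by blast
    show "\<forall>a\<in>?W. \<forall>b\<in>?W. \<not> adj E a b"
    proof (intro ballI notI)
      fix a b assume a: "a \<in> ?W" and b: "b \<in> ?W" and ab: "adj E a b"
      have "b \<in> ?X" using nbW a ab by blast
      moreover have "?X \<subseteq> D" using edge_sub u1 u2 c(3) by blast
      ultimately show False using b c d by blast
    qed
    show "\<forall>a\<in>?D0. \<not> ((\<exists>w\<in>?W. adj E w a) \<and> (\<exists>w\<in>?W. adj E w (p a)))"
      using nbW by blast
    have Xs: "?X \<subseteq> D" using edge_sub u1 u2 c(3) by blast
    have "card ?X = 6"
    proof -
      have "edge u1 \<inter> edge x = {}" using c(4,6) unfolding edge_def by auto
      moreover have "edge u2 \<inter> edge x = {}" using x2 unfolding edge_def by auto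
      moreover have "card (edge u1) = 2" "card (edge u2) = 2" "card (edge x) = 2"
        using c(22) d(22) c(23) unfolding edge_def by auto
      have "?X = {u1, p u1, u2, p u2, x, p x}" unfolding edge_def by auto
      moreover have "distinct [u1, p u1, u2, p u2, x, p x]"
        using c(4,6,22,23) d(22) x2 e12 unfolding edge_def by auto
      ultimately show ?thesis using distinct_card[of "[u1, p u1, u2, p u2, x, p x]"] by simp
    qed
    hence "card ?D0 + 6 = card D" using cardX[OF Xs] by simp
    moreover have "card ?W = 4"
    proof -
      have "s1 \<noteq> r1" "s1 \<noteq> r2" "s2 \<noteq> r1" "s2 \<noteq> r2" using sn c(1) by auto
      thus ?thesis using c(2) d(2) by simp
    qed
    ultimately show "card D < card ?D0 + 2 * card ?W" by linarith
  qed
qed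

end


definition Qb :: "'a set set \<Rightarrow> 'a set \<Rightarrow> ('a \<Rightarrow> 'a set) \<Rightarrow> 'a set \<Rightarrow> nat \<Rightarrow> (nat \<Rightarrow> 'a) \<Rightarrow> bool" where
  "Qb E D ed X t f \<longleftrightarrow> t \<in> {0, 1, 2} \<and> bij_betw f (templ_V t) X \<and> (\<forall>e\<in>templ_E t. f ` e \<in> E) \<and>
     D \<inter> X = f ` templ_M t \<and> (\<forall>a\<in>X \<inter> D. \<exists>e'\<in>templ_E t. ed a = f ` e')"

lemma bij_nth: "distinct xs \<Longrightarrow> A = {0..<length xs} \<Longrightarrow> bij_betw ((!) xs) A (set xs)"
  by (simp add: bij_betw_def inj_on_nth set_conv_nth image_def) (auto simp: set_conv_nth)

lemma tV0: "templ_V 0 = {0..<2}" by (auto simp: templ_V_def)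
lemma tV1: "templ_V 1 = {0..<3}" by (auto simp: templ_V_def)
lemma tV2: "templ_V 2 = {0..<6}" by (auto simp: templ_V_def)
lemma tV1': "templ_V (Suc 0) = {0..<3}" by (auto simp: templ_V_def)

context tight2 begin

definition sat where "sat v \<longleftrightarrow> (\<exists>u\<in>D. v \<in> sats u)"
definition blk where "blk u = edge u \<union> hosts u \<union> sats u"

lemma card2_nsat: "u \<in> D \<Longrightarrow> card (hosts u) = 2 \<Longrightarrow> \<not> sat u"
  unfolding sat_def using F6 by fastforce

lemma sats_closed: "u \<in> D \<Longrightarrow> v \<in> sats u \<Longrightarrow> p v \<in> sats u"
proof -
  assume u: "u \<in> D" and v: "v \<in> sats u"
  obtain r1 r2 x where c: "x \<in> D" "sats u = {x, p x}"
    using cfg[OF u sats_card[OF v]] by metis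
  thus ?thesis using v pp by auto
qed

lemma sat_p: "v \<in> D \<Longrightarrow> sat (p v) = sat v"
  unfolding sat_def using sats_closed pp by metis

lemma sats_p: "u \<in> D \<Longrightarrow> sats (p u) = sats u"
  unfolding sats_def using edge_p hosts_p by simp

lemma blk_p: "u \<in> D \<Longrightarrow> blk (p u) = blk u"
  unfolding blk_def using edge_p hosts_p sats_p by simp

lemma edge_int: "u \<in> D \<Longrightarrow> w \<in> D \<Longrightarrow> z \<in> edge u \<Longrightarrow> z \<in> edge w \<Longrightarrow> w \<in> edge u"
  unfolding edge_def using pp p_inj by auto

lemma blk_eq: "u \<in> D \<Longrightarrow> w \<in> edge u \<Longrightarrow> blk w = blk u"
  unfolding edge_def using blk_p by auto

lemma blk_V: "u \<in> D \<Longrightarrow> blk u \<subseteq> V"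
  unfolding blk_def using edge_sub DV hostsD sats_sub by blast

lemma cover: "v \<in> V \<Longrightarrow> \<exists>u\<in>D. \<not> sat u \<and> v \<in> blk u"
proof -
  assume v: "v \<in> V"
  show ?thesis
  proof (cases "v \<in> D")
    case True
    show ?thesis
    proof (cases "sat v")
      case False thus ?thesis using True unfolding blk_def edge_def by blast
    next
      case s: True
      then obtain u where u: "u \<in> D" "v \<in> sats u" unfolding sat_def by blast
      hence "\<not> sat u" using card2_nsat sats_card by blast
      thus ?thesis using u unfolding blk_def by blast
    qed
  next
    case False
    then obtain u where u: "u \<in> D" "v \<in> hosts u" using F1 v by blast
    have "\<not> sat u"
    proof
      assume "sat u"
      then obtain u' where "u' \<in> D" "u \<in> sats u'" unfolding sat_def by blast
      hence "hosts u = {}" using F6 by blast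
      thus False using u by blast
    qed
    thus ?thesis using u unfolding blk_def by blast
  qed
qed

lemma nsat_edge: "u \<in> D \<Longrightarrow> \<not> sat u \<Longrightarrow> z \<in> edge u \<Longrightarrow> \<not> sat z"
  unfolding edge_def using sat_p by auto

lemma blk_disj: "u \<in> D \<Longrightarrow> w \<in> D \<Longrightarrow> \<not> sat u \<Longrightarrow> \<not> sat w \<Longrightarrow> z \<in> blk u \<Longrightarrow> z \<in> blk w \<Longrightarrow> blk w = blk u"
proof -
  assume u: "u \<in> D" and w: "w \<in> D" and su: "\<not> sat u" and sw: "\<not> sat w" and zu: "z \<in> blk u" and zw: "z \<in> blk w"
  have "w \<in> edge u"
  proof -
    have hD: "\<And>y. y \<in> hosts y' \<Longrightarrow> y \<notin> D" for y' using hostsD by blast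
    consider (a) "z \<in> edge u" | (b) "z \<in> hosts u" | (c) "z \<in> sats u" using zu unfolding blk_def by blast
    thus ?thesis
    proof cases
      case a
      have zD: "z \<in> D" using a edge_sub u by blast
      consider (a1) "z \<in> edge w" | (b1) "z \<in> hosts w" | (c1) "z \<in> sats w" using zw unfolding blk_def by blast
      thus ?thesis
      proof cases
        case a1 thus ?thesis using edge_int u w a by blast
      next
        case b1 thus ?thesis using hostsD zD by blast
      next
        case c1 hence "sat z" unfolding sat_def using w by blast
        thus ?thesis using nsat_edge[OF u su a] by blast
      qed
    next
      case b
      consider (a1) "z \<in> edge w" | (b1) "z \<in> hosts w" | (c1) "z \<in> sats w" using zw unfolding blk_def by blast
      thus ?thesis
      proof cases
        case a1 thus ?thesis using hostsD b edge_sub w by blast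
      next
        case b1 thus ?thesis using F2 u w b unfolding edge_def by blast
      next
        case c1 thus ?thesis using hostsD b sats_sub by blast
      qed
    next
      case c
      have zD: "z \<in> D" using c sats_sub by blast
      consider (a1) "z \<in> edge w" | (b1) "z \<in> hosts w" | (c1) "z \<in> sats w" using zw unfolding blk_def by blast
      thus ?thesis
      proof cases
        case a1
        have "sat z" unfolding sat_def using u c by blast
        thus ?thesis using nsat_edge[OF w sw a1] by blast
      next
        case b1 thus ?thesis using hostsD zD by blast
      next
        case c1 thus ?thesis using F7 u w c by blast
      qed
    qed
  qed
  thus ?thesis using blk_eq u by blast
qed

definition PP where "PP = blk ` {u \<in> D. \<not> sat u}"

lemma PP_part: "partition_on V PP"
proof (rule partition_onI)
  show "\<Union> PP = V"
  proof
    show "\<Union> PP \<subseteq> V" unfolding PP_def using blk_V by blast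
    show "V \<subseteq> \<Union> PP" unfolding PP_def using cover by blast
  qed
  show "\<And>X Y. X \<in> PP \<Longrightarrow> Y \<in> PP \<Longrightarrow> X \<noteq> Y \<Longrightarrow> disjnt X Y"
    unfolding PP_def disjnt_def using blk_disj by blast
  show "{} \<notin> PP" unfolding PP_def blk_def edge_def by blast
qed

lemma blk_Q: "u \<in> D \<Longrightarrow> \<not> sat u \<Longrightarrow> \<exists>t f. Qb E D edge (blk u) t f"
proof -
  assume u: "u \<in> D" and su: "\<not> sat u"
  have pu: "p u \<in> D" "p u \<noteq> u" "adj E u (p u)" using pD p_ne padj2 u by auto
  have eu: "edge (p u) = edge u" using edge_p u by blast
  have uE: "{u, p u} \<in> E" using pu adj_def by metis
  have c3: "card (hosts u) \<le> 2" "finite (hosts u)" using F3 u by auto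
  consider (z) "card (hosts u) = 0" | (o) "card (hosts u) = 1" | (t) "card (hosts u) = 2" using c3 by linarith
  thus ?thesis
  proof cases
    case z
    hence h0: "hosts u = {}" using c3 by simp
    have s0: "sats u = {}" unfolding sats_def using z by simp
    let ?xs = "[u, p u]"
    have X: "blk u = set ?xs" unfolding blk_def edge_def using h0 s0 by auto
    have "Qb E D edge (blk u) 0 ((!) ?xs)"
      unfolding Qb_def
    proof (intro conjI)
      show "bij_betw ((!) ?xs) (templ_V 0) (blk u)" unfolding X by (rule bij_nth) (use pu in \<open>auto simp: tV0\<close>)
      show "\<forall>e\<in>templ_E 0. (!) ?xs ` e \<in> E" using uE by (simp add: templ_E_def)
      show "D \<inter> blk u = (!) ?xs ` templ_M 0" using X u pu by (auto simp: templ_M_def)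
      show "\<forall>a\<in>blk u \<inter> D. \<exists>e'\<in>templ_E 0. edge a = (!) ?xs ` e'"
        using X eu by (auto simp: templ_E_def edge_def)
    qed simp
    thus ?thesis by blast
  next
    case o
    then obtain r where h1: "hosts u = {r}" using card_1_singletonE by blast
    have s0: "sats u = {}" unfolding sats_def using o by simp
    have r: "adj E r u" "adj E r (p u)" "r \<notin> D" using hostsD h1 by auto
    let ?xs = "[u, p u, r]"
    have X: "blk u = set ?xs" unfolding blk_def edge_def using h1 s0 by auto
    have "Qb E D edge (blk u) 1 ((!) ?xs)"
      unfolding Qb_def
    proof (intro conjI)
      show "bij_betw ((!) ?xs) (templ_V 1) (blk u)" unfolding X by (rule bij_nth) (use pu u r in \<open>auto simp: tV1 tV1'\<close>)
      show "\<forall>e\<in>templ_E 1. (!) ?xs ` e \<in> E" using uE r by (auto simp: templ_E_def adj_def insert_commute)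
      show "D \<inter> blk u = (!) ?xs ` templ_M 1" using X u pu r by (auto simp: templ_M_def)
      show "\<forall>a\<in>blk u \<inter> D. \<exists>e'\<in>templ_E 1. edge a = (!) ?xs ` e'"
        using X eu r by (auto simp: templ_E_def edge_def)
    qed simp
    thus ?thesis by blast
  next
    case t
    obtain r1 r2 x where c: "hosts u = {r1, r2}" "r1 \<noteq> r2" "x \<in> D" "x \<notin> edge u" "p x \<in> D" "p x \<notin> edge u"
      "adj E r1 u" "adj E r1 (p u)" "adj E r2 u" "adj E r2 (p u)" "adj E r1 x" "adj E r2 (p x)"
      "r1 \<in> V" "r2 \<in> V" "r1 \<notin> D" "r2 \<notin> D" "\<not> adj E r1 r2"
      "sats u = {x, p x}" "p x \<noteq> x"
      using cfg[OF u t] by metis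
    have xe: "x \<noteq> u" "x \<noteq> p u" "p x \<noteq> u" "p x \<noteq> p u" using c(4,6) unfolding edge_def by auto
    have ex: "edge (p x) = edge x" using edge_p c(3) by blast
    have xE: "{x, p x} \<in> E" using padj2 c(3) adj_def by metis
    let ?xs = "[r1, r2, u, p u, x, p x]"
    have X: "blk u = set ?xs" unfolding blk_def edge_def using c by auto
    have ds: "distinct ?xs" using c xe pu u by auto
    have "Qb E D edge (blk u) 2 ((!) ?xs)"
      unfolding Qb_def
    proof (intro conjI)
      show "bij_betw ((!) ?xs) (templ_V 2) (blk u)" unfolding X by (rule bij_nth[OF ds]) (simp only: tV2, simp add: eval_nat_numeral)
      show "\<forall>e\<in>templ_E 2. (!) ?xs ` e \<in> E" using uE xE c by (auto simp: templ_E_def adj_def insert_commute)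
      show "D \<inter> blk u = (!) ?xs ` templ_M 2" using X u pu c by (auto simp: templ_M_def)
      show "\<forall>a\<in>blk u \<inter> D. \<exists>e'\<in>templ_E 2. edge a = (!) ?xs ` e'"
      proof
        fix a assume a: "a \<in> blk u \<inter> D"
        hence "a = u \<or> a = p u \<or> a = x \<or> a = p x" using X c by auto
        hence "edge a = edge u \<or> edge a = edge x" using eu ex by auto
        moreover have "edge u = (!) ?xs ` {2, 3}" "edge x = (!) ?xs ` {4, 5}" by (auto simp: edge_def)
        moreover have "{2::nat, 3} \<in> templ_E 2" "{4::nat, 5} \<in> templ_E 2" by (auto simp: templ_E_def)
        ultimately show "\<exists>e'\<in>templ_E 2. edge a = (!) ?xs ` e'" by metis
      qed
    qed simp
    thus ?thesis by blast
  qed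
qed

lemma tight_class: "in_class_G V E"
proof -
  have "\<forall>X\<in>PP. \<exists>t f. Qb E D edge X t f" unfolding PP_def using blk_Q by blast
  then obtain ty emb where Q: "\<forall>X\<in>PP. Qb E D edge X (ty X) (emb X)" by metis
  have fin: "\<forall>e\<in>E. \<not> (\<exists>X\<in>PP. \<exists>e'\<in>templ_E (ty X). e = emb X ` e') \<longrightarrow> card (e \<inter> D) \<le> 1"
  proof (intro ballI impI)
    fix e assume e: "e \<in> E" and ne: "\<not> (\<exists>X\<in>PP. \<exists>e'\<in>templ_E (ty X). e = emb X ` e')"
    obtain a b where ab: "e = {a, b}" "a \<noteq> b" "a \<in> V" "b \<in> V" using e sg unfolding simple_graph_def by blast
    show "card (e \<inter> D) \<le> 1"
    proof (rule ccontr)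
      assume "\<not> card (e \<inter> D) \<le> 1"
      hence "a \<in> D \<and> b \<in> D"
        using ab by (cases "a \<in> D"; cases "b \<in> D") (auto simp: Int_insert_left)
      hence abD: "a \<in> D" "b \<in> D" by auto
      have "adj E b a" using e ab adj_def insert_commute by metis
      hence "b = p a" using p_uniq abD by blast
      hence ee: "e = edge a" using ab edge_def by simp
      obtain X where X: "X \<in> PP" "a \<in> X" using PP_part ab unfolding partition_on_def by blast
      have "\<exists>e'\<in>templ_E (ty X). edge a = emb X ` e'" using Q X abD unfolding Qb_def by blast
      thus False using ne X ee by blast
    qed
  qed
  show ?thesis
    unfolding in_class_G_def
    apply (rule disjI2)
    apply (rule exI[of _ PP], rule exI[of _ D], rule exI[of _ ty], rule exI[of _ emb])
    using PP_part Q fin unfolding Qb_def by (auto simp: Int_commute)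
qed

end


lemma templ_sub: "t \<in> {0,1,2} \<Longrightarrow> e \<in> templ_E t \<Longrightarrow> e \<subseteq> templ_V t"
  by (auto simp: templ_E_def templ_V_def)

lemma templM_sub: "t \<in> {0,1,2} \<Longrightarrow> templ_M t \<subseteq> templ_V t"
  by (auto simp: templ_M_def templ_V_def)

lemma templE_pair: "e \<in> templ_E t \<Longrightarrow> \<exists>i j. e = {i, j} \<and> i \<noteq> j"
proof -
  assume "e \<in> templ_E t"
  hence "card e = 2" by (auto simp: templ_E_def split: if_splits)
  thus ?thesis by (metis card_2_iff)
qed

lemma templ_match: "t \<in> {0,1,2} \<Longrightarrow> {i, j} \<in> templ_E t \<Longrightarrow> {i, k} \<in> templ_E t \<Longrightarrow>
   i \<in> templ_M t \<Longrightarrow> j \<in> templ_M t \<Longrightarrow> k \<in> templ_M t \<Longrightarrow> i \<noteq> j \<Longrightarrow> i \<noteq> k \<Longrightarrow> j = k"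
  by (auto simp: templ_E_def templ_M_def doubleton_eq_iff)

lemma templ_clique: "t \<in> {0,1} \<Longrightarrow> i \<in> templ_V t \<Longrightarrow> j \<in> templ_V t \<Longrightarrow> i \<noteq> j \<Longrightarrow> {i, j} \<in> templ_E t"
  by (auto simp: templ_E_def templ_V_def insert_commute)

lemma templ_three: "i \<in> templ_V 2 \<Longrightarrow> j \<in> templ_V 2 \<Longrightarrow> k \<in> templ_V 2 \<Longrightarrow> i \<noteq> j \<Longrightarrow> j \<noteq> k \<Longrightarrow> i \<noteq> k \<Longrightarrow>
   {i, j} \<in> templ_E 2 \<or> {j, k} \<in> templ_E 2 \<or> {i, k} \<in> templ_E 2"
  unfolding templ_V_def templ_E_def by (simp add: doubleton_eq_iff) (elim disjE; simp)

lemma card_templM: "t \<in> {0,1,2} \<Longrightarrow> card (templ_M t) = (if t = 2 then 4 else 2)"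
  by (auto simp: templ_M_def)

lemma card_part_sum:
  assumes "partition_on V P" "finite V" "A \<subseteq> V"
  shows "card A = (\<Sum>X\<in>P. card (A \<inter> X))"
proof -
  have fP: "finite P" using assms(1,2) partition_onD1 by (metis finite_UnionD)
  have VP: "V = \<Union>P" by (rule partition_onD1[OF assms(1)])
  have A: "A = (\<Union>X\<in>P. A \<inter> X)" using assms(3) VP by blast
  have "card (\<Union>X\<in>P. A \<inter> X) = (\<Sum>X\<in>P. card (A \<inter> X))"
  proof (rule card_UN_disjoint[OF fP])
    show "\<forall>X\<in>P. finite (A \<inter> X)" using assms(2,3) finite_subset by blast
    show "\<forall>X\<in>P. \<forall>Y\<in>P. X \<noteq> Y \<longrightarrow> A \<inter> X \<inter> (A \<inter> Y) = {}"
      using partition_onD2[OF assms(1)] unfolding disjoint_def disjnt_def by blast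
  qed
  thus ?thesis using A by simp
qed

context sgraph begin

lemma K4_ineq: "is_K4 V E \<Longrightarrow> 2 * alpha V E \<le> diss V E"
proof -
  assume K: "is_K4 V E"
  have c4: "card V = 4" and EE: "E = {{u, v} | u v. u \<in> V \<and> v \<in> V \<and> u \<noteq> v}" using K unfolding is_K4_def by auto
  have adjall: "\<And>a b. a \<in> V \<Longrightarrow> b \<in> V \<Longrightarrow> a \<noteq> b \<Longrightarrow> adj E a b" unfolding adj_def using EE by blast
  obtain S where S: "independent_set V E S" "card S = alpha V E" using alpha_ex by blast
  have "card S \<le> 1"
  proof -
    have "finite S" using S finV unfolding independent_set_def using finite_subset by blast
    moreover have "\<forall>a\<in>S. \<forall>b\<in>S. a = b" using S adjall unfolding independent_set_def by blast
    ultimately have "card S \<le> Suc 0" using card_le_Suc0_iff_eq by blast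
    thus ?thesis by simp
  qed
  moreover have "2 \<le> diss V E"
  proof -
    have "2 \<le> card V" using c4 by simp
    then obtain T where T: "T \<subseteq> V" "card T = 2" by (rule obtain_subset_with_card_n)
    then obtain a b where ab: "T = {a, b}" "a \<noteq> b" by (metis card_2_iff)
    have "dissociation_set V E T"
      unfolding dissociation_set_def
    proof (intro conjI ballI)
      show "T \<subseteq> V" by (rule T)
      fix v assume v: "v \<in> T"
      have "{u \<in> T. adj E u v} \<subseteq> T - {v}" using adjD by blast
      moreover have "card (T - {v}) = 1" using v ab by auto
      ultimately show "card {u \<in> T. adj E u v} \<le> 1" using ab
        by (metis (no_types, lifting) card_mono finite.emptyI finite.insertI finite_Diff)
    qed
    thus ?thesis using diss_ge T by fastforce
  qed
  ultimately show ?thesis using S by linarith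
qed

lemma class_ineq:
  assumes P: "partition_on V P"
    and Q: "\<forall>X\<in>P. ty X \<in> {0, 1, 2} \<and> bij_betw (emb X) (templ_V (ty X)) X \<and>
              (\<forall>e\<in>templ_E (ty X). emb X ` e \<in> E) \<and> M \<inter> X = emb X ` templ_M (ty X)"
    and F: "\<forall>e\<in>E. \<not> (\<exists>X\<in>P. \<exists>e'\<in>templ_E (ty X). e = emb X ` e') \<longrightarrow> card (e \<inter> M) \<le> 1"
  shows "2 * alpha V E \<le> diss V E"
proof -
  let ?D = "M \<inter> V"
  have VP: "V = \<Union>P" using P partition_onD1 by blast
  have disj: "\<And>X Y v. X \<in> P \<Longrightarrow> Y \<in> P \<Longrightarrow> v \<in> X \<Longrightarrow> v \<in> Y \<Longrightarrow> X = Y"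
    using partition_onD2[OF P] unfolding disjoint_def disjnt_def by blast
  have mm: "\<And>u v. u \<in> ?D \<Longrightarrow> v \<in> ?D \<Longrightarrow> adj E u v \<Longrightarrow>
      \<exists>X\<in>P. \<exists>i j. {i, j} \<in> templ_E (ty X) \<and> i \<in> templ_M (ty X) \<and> j \<in> templ_M (ty X) \<and> i \<noteq> j \<and>
        emb X i = v \<and> emb X j = u"
  proof -
    fix u v assume u: "u \<in> ?D" and v: "v \<in> ?D" and a: "adj E u v"
    have e: "{u, v} \<in> E" and uv: "u \<noteq> v" using a adjD unfolding adj_def by auto
    have "card ({u, v} \<inter> M) = 2" using u v uv by (simp add: Int_insert_left)
    then obtain X e' where X: "X \<in> P" "e' \<in> templ_E (ty X)" "{u, v} = emb X ` e'" using F e by fastforce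
    have QX: "ty X \<in> {0,1,2}" "bij_betw (emb X) (templ_V (ty X)) X" "M \<inter> X = emb X ` templ_M (ty X)"
      using Q X by auto
    obtain i j where ij: "e' = {i, j}" "i \<noteq> j" using templE_pair X(2) by blast
    have ijV: "i \<in> templ_V (ty X)" "j \<in> templ_V (ty X)" using templ_sub QX(1) X(2) ij by auto
    have inj: "inj_on (emb X) (templ_V (ty X))" using QX(2) bij_betw_def by blast
    have "emb X i \<in> X" "emb X j \<in> X" using bij_betwE[OF QX(2)] ijV by blast+
    hence uvX: "u \<in> X" "v \<in> X" using X(3) ij by (auto simp: doubleton_eq_iff)
    have Mi: "\<And>k. k \<in> templ_V (ty X) \<Longrightarrow> emb X k \<in> M \<Longrightarrow> k \<in> templ_M (ty X)"
    proof -
      fix k assume k: "k \<in> templ_V (ty X)" "emb X k \<in> M"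
      have "emb X k \<in> X" using k QX(2) bij_betwE by blast
      hence "emb X k \<in> emb X ` templ_M (ty X)" using k QX(3) by blast
      then obtain m where m: "m \<in> templ_M (ty X)" "emb X k = emb X m" by blast
      have "m \<in> templ_V (ty X)" using m templM_sub QX(1) by blast
      thus "k \<in> templ_M (ty X)" using inj k m inj_onD by metis
    qed
    have "(emb X i = v \<and> emb X j = u) \<or> (emb X i = u \<and> emb X j = v)"
      using X(3) ij uv by (auto simp: doubleton_eq_iff)
    thus "\<exists>X\<in>P. \<exists>i j. {i, j} \<in> templ_E (ty X) \<and> i \<in> templ_M (ty X) \<and> j \<in> templ_M (ty X) \<and> i \<noteq> j \<and>
        emb X i = v \<and> emb X j = u"
    proof
      assume h: "emb X i = v \<and> emb X j = u"
      thus ?thesis using X ij ijV Mi u v by (intro bexI[OF _ X(1)] exI[of _ i] exI[of _ j]) auto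
    next
      assume h: "emb X i = u \<and> emb X j = v"
      thus ?thesis using X ij ijV Mi u v by (intro bexI[OF _ X(1)] exI[of _ j] exI[of _ i]) (auto simp: insert_commute)
    qed
  qed
  have dD: "dissociation_set V E ?D"
    unfolding dissociation_set_def
  proof (intro conjI ballI)
    show "?D \<subseteq> V" by blast
    fix v assume v: "v \<in> ?D"
    have uniq: "\<forall>u\<in>{u \<in> ?D. adj E u v}. \<forall>u'\<in>{u \<in> ?D. adj E u v}. u = u'"
    proof (intro ballI)
      fix u u' assume u: "u \<in> {u \<in> ?D. adj E u v}" and u': "u' \<in> {u \<in> ?D. adj E u v}"
      obtain X i j where X: "X \<in> P" "{i, j} \<in> templ_E (ty X)" "i \<in> templ_M (ty X)" "j \<in> templ_M (ty X)" "i \<noteq> j"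
        "emb X i = v" "emb X j = u" using mm u v by blast
      obtain X' i' j' where X': "X' \<in> P" "{i', j'} \<in> templ_E (ty X')" "i' \<in> templ_M (ty X')" "j' \<in> templ_M (ty X')" "i' \<noteq> j'"
        "emb X' i' = v" "emb X' j' = u'" using mm u' v by blast
      have QX: "ty X \<in> {0,1,2}" "bij_betw (emb X) (templ_V (ty X)) X" using Q X(1) by auto
      have iV: "i \<in> templ_V (ty X)" "j \<in> templ_V (ty X)" using templ_sub QX(1) X(2) by auto
      have vX: "v \<in> X" using X(6) iV QX(2) bij_betwE by blast
      have iV': "i' \<in> templ_V (ty X')" using templ_sub Q X'(1,2) by blast
      have "v \<in> X'" using X'(6) iV' Q X'(1) bij_betwE by blast
      hence XX: "X' = X" using disj X(1) X'(1) vX by blast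
      have "i' = i" using XX X(6) X'(6) iV iV' QX(2) unfolding bij_betw_def by (metis inj_onD)
      hence "j' = j" using templ_match[OF QX(1) X(2)] X X' XX by metis
      thus "u = u'" using X X' XX by blast
    qed
    have sub: "{u \<in> ?D. adj E u v} \<subseteq> V" by blast
    have fin: "finite {u \<in> ?D. adj E u v}" using finite_subset[OF sub finV] .
    have "card {u \<in> ?D. adj E u v} \<le> Suc 0" using card_le_Suc0_iff_eq[OF fin] uniq by blast
    thus "card {u \<in> ?D. adj E u v} \<le> 1" by simp
  qed
  obtain I where I: "independent_set V E I" "card I = alpha V E" using alpha_ex by blast
  have blk: "\<And>X. X \<in> P \<Longrightarrow> 2 * card (I \<inter> X) \<le> card (?D \<inter> X)"
  proof -
    fix X assume X: "X \<in> P"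
    have QX: "ty X \<in> {0,1,2}" "bij_betw (emb X) (templ_V (ty X)) X" "\<forall>e\<in>templ_E (ty X). emb X ` e \<in> E"
      "M \<inter> X = emb X ` templ_M (ty X)" using Q X by auto
    have XV: "X \<subseteq> V" using X VP by blast
    have cM: "card (?D \<inter> X) = card (templ_M (ty X))"
    proof -
      have "?D \<inter> X = emb X ` templ_M (ty X)" using QX(4) XV by blast
      moreover have "inj_on (emb X) (templ_M (ty X))"
        using QX(2) templM_sub[OF QX(1)] unfolding bij_betw_def using inj_on_subset by blast
      ultimately show ?thesis using card_image by metis
    qed
    have finIX: "finite (I \<inter> X)" using XV finV finite_subset by blast
    have pre: "\<exists>i\<in>templ_V (ty X). emb X i = a" if aX: "a \<in> X" for a
    proof -
      have "a \<in> emb X ` templ_V (ty X)" using bij_betw_imp_surj_on[OF QX(2)] aX by simp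
      thus ?thesis by blast
    qed
    have nadj: "\<And>a b. a \<in> I \<Longrightarrow> b \<in> I \<Longrightarrow> \<not> adj E a b" using I unfolding independent_set_def by blast
    have ee: "\<And>i j. {i, j} \<in> templ_E (ty X) \<Longrightarrow> adj E (emb X i) (emb X j)"
      using QX(3) unfolding adj_def by fastforce
    show "2 * card (I \<inter> X) \<le> card (?D \<inter> X)"
    proof (cases "ty X = 2")
      case True
      have "card (I \<inter> X) \<le> 2"
      proof (rule ccontr)
        assume "\<not> card (I \<inter> X) \<le> 2"
        hence "3 \<le> card (I \<inter> X)" by linarith
        then obtain T where T: "T \<subseteq> I \<inter> X" "card T = 3" by (rule obtain_subset_with_card_n)
        then obtain a b c where abc: "T = {a, b, c}" "a \<noteq> b" "b \<noteq> c" "a \<noteq> c" by (metis card_3_iff)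
        have aX: "a \<in> X" "b \<in> X" "c \<in> X" "a \<in> I" "b \<in> I" "c \<in> I" using T abc by auto
        obtain i where i: "i \<in> templ_V 2" "emb X i = a" using pre[OF aX(1)] True by auto
        obtain j where j: "j \<in> templ_V 2" "emb X j = b" using pre[OF aX(2)] True by auto
        obtain k where k: "k \<in> templ_V 2" "emb X k = c" using pre[OF aX(3)] True by auto
        have "i \<noteq> j" "j \<noteq> k" "i \<noteq> k" using i j k abc by auto
        hence "{i, j} \<in> templ_E 2 \<or> {j, k} \<in> templ_E 2 \<or> {i, k} \<in> templ_E 2" using templ_three i j k by blast
        thus False
        proof (elim disjE)
          assume "{i, j} \<in> templ_E 2" hence "adj E a b" using ee True i j by metis
          thus False using nadj aX by blast
        next
          assume "{j, k} \<in> templ_E 2" hence "adj E b c" using ee True j k by metis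
          thus False using nadj aX by blast
        next
          assume "{i, k} \<in> templ_E 2" hence "adj E a c" using ee True i k by metis
          thus False using nadj aX by blast
        qed
      qed
      thus ?thesis using cM True card_templM[OF QX(1)] by simp
    next
      case False
      hence t01: "ty X \<in> {0, 1}" using QX(1) by auto
      have "\<forall>a\<in>I \<inter> X. \<forall>b\<in>I \<inter> X. a = b"
      proof (intro ballI)
        fix a b assume a: "a \<in> I \<inter> X" and b: "b \<in> I \<inter> X"
        obtain i where i: "i \<in> templ_V (ty X)" "emb X i = a" using pre a by blast
        obtain j where j: "j \<in> templ_V (ty X)" "emb X j = b" using pre b by blast
        show "a = b"
        proof (rule ccontr)
          assume "a \<noteq> b"
          hence "i \<noteq> j" using i j by auto
          hence "{i, j} \<in> templ_E (ty X)" using templ_clique t01 i j by blast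
          thus False using ee i j nadj a b by blast
        qed
      qed
      hence "card (I \<inter> X) \<le> Suc 0" using card_le_Suc0_iff_eq[OF finIX] by blast
      hence "card (I \<inter> X) \<le> 1" by simp
      thus ?thesis using cM False card_templM[OF QX(1)] by simp
    qed
  qed
  have IV: "I \<subseteq> V" using I unfolding independent_set_def by blast
  have "2 * card I = (\<Sum>X\<in>P. 2 * card (I \<inter> X))"
    using card_part_sum[OF P finV IV] by (simp add: sum_distrib_left)
  also have "\<dots> \<le> (\<Sum>X\<in>P. card (?D \<inter> X))" using blk by (rule sum_mono)
  also have "\<dots> = card ?D" using card_part_sum[OF P finV, of ?D] by simp
  also have "\<dots> \<le> diss V E" using diss_ge dD by blast
  finally show ?thesis using I by simp
qed

lemma class_ineq': "in_class_G V E \<Longrightarrow> 2 * alpha V E \<le> diss V E"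
  unfolding in_class_G_def
  apply (elim disjE exE conjE)
   apply (erule K4_ineq)
  apply (rule class_ineq; assumption)
  done

end


theorem theorem3:
  fixes V :: "'a set" and E :: "'a set set"
  assumes "simple_graph V E" and "connected_graph V E" and "subcubic V E"
  shows "2 * alpha V E = diss V E \<longleftrightarrow> in_class_G V E"
proof -
  have S: "sgraph V E" using assms(1,3) by (rule sgraph.intro)
  interpret sgraph V E by (rule S)
  show ?thesis
  proof
    assume eq: "2 * alpha V E = diss V E"
    obtain D where D: "dissociation_set V E D" "card D = diss V E" using diss_ex by blast
    have T: "tight V E D" by (rule tight.intro[OF S], rule tight_axioms.intro) (use D eq in auto)
    interpret tight V E D by (rule T)
    show "in_class_G V E"
    proof (cases "\<exists>u\<in>D. \<exists>r1\<in>hosts u. \<exists>r2\<in>hosts u. adj E r1 r2")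
      case True
      then obtain u r1 r2 where h: "u \<in> D" "r1 \<in> hosts u" "r2 \<in> hosts u" "adj E r1 r2" by blast
      have "r1 \<noteq> r2" using h(4) adjD by blast
      hence "is_K4 V E" using F4[OF assms(2) h(1,2,3)] h(4) by blast
      thus ?thesis unfolding in_class_G_def by blast
    next
      case False
      have T2: "tight2 V E D" by (rule tight2.intro[OF T], rule tight2_axioms.intro) (use False in blast)
      interpret tight2 V E D by (rule T2)
      show ?thesis by (rule tight_class)
    qed
  next
    assume "in_class_G V E"
    hence "2 * alpha V E \<le> diss V E" by (rule class_ineq')
    thus "2 * alpha V E = diss V E" using diss_le by linarith
  qed
qed


end
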